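(* Let $\vec{\alpha}=\langle\alpha_s:s\in[\mathbb{N}]^{<\infty}\rangle$ be a sequence of nonstandard hypernatural numbers. Every subset of $[\mathbb{N}]^\infty$ that is open in the $\vec{\alpha}$-Ellentuck topology is $\vec{\alpha}$-Ramsey.
   Context: Setting (Alpha-Theory of Benci–Di Nasso): ZFC together with a new symbol $\alpha$ satisfying: ($\alpha$1) every sequence $\varphi=\langle\varphi_i:i\in\mathbb{N}\rangle$ has a unique ideal value $\varphi[\alpha]$; ($\alpha$2) if $\varphi[\alpha]=\psi[\alpha]$ and $f\circ\varphi$, $f\circ\psi$ make sense then $(f\circ\varphi)[\alpha]=(f\circ\psi)[\alpha]$; ($\alpha$3) constant real sequences $r$ have ideal value $r$, and $\langle i\rangle$ has ideal value $\alpha\notin\mathbb{N}$; ($\alpha$4) if $\vartheta_i=\{\varphi_i,\psi_i\}$ then $\vartheta[\alpha]=\{\varphi[\alpha],\psi[\alpha]\}$; ($\alpha$5) the constant sequence $\emptyset$ has ideal value $\emptyset$, and for nonempty $\psi_i$, $\psi[\alpha]=\{\vartheta[\alpha]:\vartheta_i\in\psi_i\ \forall i\}$. ${}^*A$ is the ideal value of the constant sequence $A$; elements of ${}^*\mathbb{N}\setminus\mathbb{N}$ are nonstandard hypernatural numbers. For finite $s$, $s\sqsubseteq X$ means $s=\{j\in X:j\le i\}$ for some $i$. A tree on $\mathbb{N}$ is a nonempty $T\subseteq[\mathbb{N}]^{<\infty}$ closed under $\sqsubseteq$-initial segments; $[T]=\{X\in[\mathbb{N}]^\infty:$ every finite $s\sqsubseteq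 X$ is in $T\}$; stem $st(T)$ = $\sqsubseteq$-maximal $s\in T$ comparable with all elements of $T$; $T/s=\{t\in T:s\sqsubseteq t\}$. An $\vec{\alpha}$-tree is a tree $T$ with a stem, $T/st(T)\neq\emptyset$, and $s\cup\{\alpha_s\}\in{}^*T$ for all $s\in T/st(T)$. $\mathcal{X}\subseteq[\mathbb{N}]^\infty$ is $\vec{\alpha}$-Ramsey if for every $\vec{\alpha}$-tree $T$ there is an $\vec{\alpha}$-tree $S\subseteq T$ with $st(S)=st(T)$ and $[S]\subseteq\mathcal{X}$ or $[S]\cap\mathcal{X}=\emptyset$. The $\vec{\alpha}$-Ellentuck topology on $[\mathbb{N}]^\infty$ is the topology with basis $\{[T]:T\text{ an }\vec{\alpha}\text{-tree}\}$. *)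

theory Defs
  imports Main
begin

text \<open>The ideal value alpha determines the
  nonprincipal ultrafilter U = {A. alpha in *A} on the naturals; a hypernatural
  number is the ideal value phi[alpha] of a sequence phi :: nat => nat, and
  phi[alpha] in *A iff {i. phi i in A} in U (more generally psi[alpha] in *T iff
  {i. psi i in T} in U).\<close>

definition nonprincipal_ultrafilter :: "nat set set \<Rightarrow> bool" where
  "nonprincipal_ultrafilter U \<longleftrightarrow>
     UNIV \<in> U \<and> {} \<notin> U \<and>
     (\<forall>A B. A \<in> U \<and> A \<subseteq> B \<longrightarrow> B \<in> U) \<and>
     (\<forall>A B. A \<in> U \<and> B \<in> U \<longrightarrow> A \<inter> B \<in> U) \<and>
     (\<forall>A. A \<in> U \<or> - A \<in> U) \<and>
     (\<forall>n. {n} \<notin> U)"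

definition nonstandard_hypnat :: "nat set set \<Rightarrow> (nat \<Rightarrow> nat) \<Rightarrow> bool" where
  "nonstandard_hypnat U \<phi> \<longleftrightarrow> (\<forall>n. {i. \<phi> i = n} \<notin> U)"

definition initseg :: "nat set \<Rightarrow> nat set \<Rightarrow> bool" (infix "\<sqsubseteq>" 50) where
  "s \<sqsubseteq> X \<longleftrightarrow> finite s \<and> (\<exists>i. s = {j \<in> X. j < i})"

definition is_tree :: "nat set set \<Rightarrow> bool" where
  "is_tree T \<longleftrightarrow> T \<noteq> {} \<and> (\<forall>t\<in>T. finite t) \<and> (\<forall>t\<in>T. \<forall>s. s \<sqsubseteq> t \<longrightarrow> s \<in> T)"

definition body :: "nat set set \<Rightarrow> nat set set" where
  "body T = {X. infinite X \<and> (\<forall>s. finite s \<and> s \<sqsubseteq> X \<longrightarrow> s \<in> T)}"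

definition is_stem :: "nat set set \<Rightarrow> nat set \<Rightarrow> bool" where
  "is_stem T s \<longleftrightarrow> s \<in> T \<and> (\<forall>t\<in>T. s \<sqsubseteq> t \<or> t \<sqsubseteq> s) \<and>
     (\<forall>s'\<in>T. (\<forall>t\<in>T. s' \<sqsubseteq> t \<or> t \<sqsubseteq> s') \<longrightarrow> s' \<sqsubseteq> s)"

definition has_stem :: "nat set set \<Rightarrow> bool" where
  "has_stem T \<longleftrightarrow> (\<exists>s. is_stem T s)"

definition stem :: "nat set set \<Rightarrow> nat set" where
  "stem T = (THE s. is_stem T s)"

definition restr :: "nat set set \<Rightarrow> nat set \<Rightarrow> nat set set" where
  "restr T s = {t \<in> T. s \<sqsubseteq> t}"

text \<open>alpha-tree for the sequence of hypernaturals alpha_s = (\<phi> s)[alpha]: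
  s union {alpha_s} in *T, i.e. {i. s union {\<phi> s i} in T} in U.\<close>
definition alpha_tree :: "nat set set \<Rightarrow> (nat set \<Rightarrow> nat \<Rightarrow> nat) \<Rightarrow> nat set set \<Rightarrow> bool" where
  "alpha_tree U \<phi> T \<longleftrightarrow> is_tree T \<and> has_stem T \<and> restr T (stem T) \<noteq> {} \<and>
     (\<forall>s\<in>restr T (stem T). {i. insert (\<phi> s i) s \<in> T} \<in> U)"

definition alpha_Ramsey :: "nat set set \<Rightarrow> (nat set \<Rightarrow> nat \<Rightarrow> nat) \<Rightarrow> nat set set \<Rightarrow> bool" where
  "alpha_Ramsey U \<phi> \<X> \<longleftrightarrow> (\<forall>T. alpha_tree U \<phi> T \<longrightarrow>
     (\<exists>S. alpha_tree U \<phi> S \<and> S \<subseteq> T \<and> stem S = stem T \<and>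
          (body S \<subseteq> \<X> \<or> body S \<inter> \<X> = {})))"

definition alpha_Ellentuck_open :: "nat set set \<Rightarrow> (nat set \<Rightarrow> nat \<Rightarrow> nat) \<Rightarrow> nat set set \<Rightarrow> bool" where
  "alpha_Ellentuck_open U \<phi> \<O> \<longleftrightarrow>
     (\<exists>\<F>. \<F> \<subseteq> {body T | T. alpha_tree U \<phi> T} \<and> \<O> = \<Union>\<F>)"

end

theory Submission
  imports Defs
begin


lemma iseg_char: "s \<sqsubseteq> X \<longleftrightarrow> finite s \<and> s \<subseteq> X \<and> (\<forall>x\<in>s. \<forall>y\<in>X. y < x \<longrightarrow> y \<in> s)"
proof
  assume "s \<sqsubseteq> X" then show "finite s \<and> s \<subseteq> X \<and> (\<forall>x\<in>s. \<forall>y\<in>X. y < x \<longrightarrow> y \<in> s)"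
    unfolding initseg_def by auto
next
  assume h: "finite s \<and> s \<subseteq> X \<and> (\<forall>x\<in>s. \<forall>y\<in>X. y < x \<longrightarrow> y \<in> s)"
  show "s \<sqsubseteq> X"
  proof (cases "s = {}")
    case True then show ?thesis unfolding initseg_def by auto
  next
    case False
    have "s = {j \<in> X. j < Suc (Max s)}"
    proof
      show "s \<subseteq> {j \<in> X. j < Suc (Max s)}" using h by (auto simp: less_Suc_eq_le)
      show "{j \<in> X. j < Suc (Max s)} \<subseteq> s"
      proof
        fix j assume j: "j \<in> {j \<in> X. j < Suc (Max s)}"
        have m: "Max s \<in> s" using h False by auto
        show "j \<in> s"
        proof (cases "j = Max s")
          case True then show ?thesis using m by simp
        next
          case False then show ?thesis using j h m by auto
        qed
      qed
    qed
    then show ?thesis using h unfolding initseg_def by blast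
  qed
qed

lemma iseg_trans: "a \<sqsubseteq> b \<Longrightarrow> b \<sqsubseteq> c \<Longrightarrow> a \<sqsubseteq> c"
  unfolding iseg_char by blast

lemma iseg_antisym: "a \<sqsubseteq> b \<Longrightarrow> b \<sqsubseteq> a \<Longrightarrow> a = b"
  unfolding iseg_char by blast

lemma iseg_refl: "finite s \<Longrightarrow> s \<sqsubseteq> s"
  unfolding iseg_char by blast

lemma iseg_sub_comp: assumes "a \<sqsubseteq> X" "b \<sqsubseteq> X" shows "a \<subseteq> b \<or> b \<subseteq> a"
proof (rule ccontr)
  assume "\<not> ?thesis"
  then obtain x y where xy: "x \<in> a" "x \<notin> b" "y \<in> b" "y \<notin> a" by blast
  have A: "\<forall>x\<in>a. \<forall>y\<in>X. y < x \<longrightarrow> y \<in> a" "a \<subseteq> X" using assms(1) unfolding iseg_char by blast+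
  have B: "\<forall>x\<in>b. \<forall>y\<in>X. y < x \<longrightarrow> y \<in> b" "b \<subseteq> X" using assms(2) unfolding iseg_char by blast+
  have "x \<noteq> y" using xy by blast
  then have "x < y \<or> y < x" by arith
  then show False
  proof
    assume "x < y" then have "x \<in> b" using B xy A by blast
    then show False using xy by blast
  next
    assume "y < x" then have "y \<in> a" using B xy A by blast
    then show False using xy by blast
  qed
qed

lemma iseg_of_sub: "a \<sqsubseteq> X \<Longrightarrow> a \<subseteq> b \<Longrightarrow> b \<subseteq> X \<Longrightarrow> a \<sqsubseteq> b"
  unfolding iseg_char by blast

lemma iseg_comp: "a \<sqsubseteq> X \<Longrightarrow> b \<sqsubseteq> X \<Longrightarrow> a \<sqsubseteq> b \<or> b \<sqsubseteq> a"
proof -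
  assume a: "a \<sqsubseteq> X" "b \<sqsubseteq> X"
  have s: "a \<subseteq> X" "b \<subseteq> X" using a unfolding iseg_char by blast+
  show ?thesis using iseg_sub_comp[OF a] iseg_of_sub[OF a(1) _ s(2)] iseg_of_sub[OF a(2) _ s(1)] by blast
qed

lemma iseg_insert: "finite s \<Longrightarrow> \<forall>y\<in>s. y < x \<Longrightarrow> s \<sqsubseteq> insert x s"
  unfolding iseg_char by auto

lemma iseg_insert_cases: "t \<sqsubseteq> insert x u \<Longrightarrow> finite u \<Longrightarrow> \<forall>y\<in>u. y < x \<Longrightarrow> t \<sqsubseteq> u \<or> t = insert x u"
proof -
  assume a: "t \<sqsubseteq> insert x u" "finite u" "\<forall>y\<in>u. y < x"
  have t: "t \<subseteq> insert x u" "\<forall>z\<in>t. \<forall>y\<in>insert x u. y < z \<longrightarrow> y \<in> t" using a(1) unfolding iseg_char by blast+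
  show ?thesis
  proof (cases "x \<in> t")
    case True
    then have "u \<subseteq> t" using t(2) a(3) by blast
    then show ?thesis using True t(1) by blast
  next
    case False
    then have "t \<subseteq> u" using t(1) by blast
    then have "t \<sqsubseteq> u" using iseg_of_sub[OF a(1)] by blast
    then show ?thesis by blast
  qed
qed

lemma iseg_card: "a \<sqsubseteq> b \<Longrightarrow> finite b \<Longrightarrow> card a \<le> card b"
  unfolding iseg_char by (simp add: card_mono)

lemma iseg_sub: "a \<sqsubseteq> b \<Longrightarrow> a \<subseteq> b"
  unfolding iseg_char by blast

lemma seg_exists: "infinite X \<Longrightarrow> \<exists>u. u \<sqsubseteq> X \<and> card u > n"
proof -
  assume "infinite X"
  then obtain F where F: "F \<subseteq> X" "finite F" "card F = Suc n" using infinite_arbitrarily_large by blast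
  then have ne: "F \<noteq> {}" by auto
  let ?u = "{j \<in> X. j < Suc (Max F)}"
  have "F \<subseteq> ?u" using F ne by (auto simp: less_Suc_eq_le)
  moreover have fu: "finite ?u" by auto
  ultimately have "card ?u \<ge> Suc n" using F card_mono by metis
  moreover have "?u \<sqsubseteq> X" using fu unfolding initseg_def by blast
  ultimately show ?thesis by (intro exI[of _ ?u]) auto
qed


lemma uf_up: "nonprincipal_ultrafilter U \<Longrightarrow> A \<in> U \<Longrightarrow> A \<subseteq> B \<Longrightarrow> B \<in> U"
  unfolding nonprincipal_ultrafilter_def by blast
lemma uf_int: "nonprincipal_ultrafilter U \<Longrightarrow> A \<in> U \<Longrightarrow> B \<in> U \<Longrightarrow> A \<inter> B \<in> U"
  unfolding nonprincipal_ultrafilter_def by blast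
lemma uf_compl: "nonprincipal_ultrafilter U \<Longrightarrow> A \<notin> U \<Longrightarrow> - A \<in> U"
  unfolding nonprincipal_ultrafilter_def by blast
lemma uf_empty: "nonprincipal_ultrafilter U \<Longrightarrow> {} \<notin> U"
  unfolding nonprincipal_ultrafilter_def by blast
lemma uf_un: "nonprincipal_ultrafilter U \<Longrightarrow> A \<union> B \<in> U \<Longrightarrow> A \<notin> U \<Longrightarrow> B \<in> U"
proof -
  assume u: "nonprincipal_ultrafilter U" "A \<union> B \<in> U" "A \<notin> U"
  have "- A \<in> U" using uf_compl[OF u(1) u(3)] .
  then have "(A \<union> B) \<inter> - A \<in> U" using uf_int[OF u(1) u(2)] by blast
  then show "B \<in> U" by (rule uf_up[OF u(1)]) blast
qed

lemma ns_le: "nonprincipal_ultrafilter U \<Longrightarrow> nonstandard_hypnat U f \<Longrightarrow> {i. f i \<le> n} \<notin> U"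
proof (induction n)
  case 0 then show ?case unfolding nonstandard_hypnat_def by simp
next
  case (Suc n)
  have e: "{i. f i \<le> Suc n} = {i. f i \<le> n} \<union> {i. f i = Suc n}" by auto
  have a: "{i. f i \<le> n} \<notin> U" using Suc by blast
  have b: "{i. f i = Suc n} \<notin> U" using Suc.prems(2) unfolding nonstandard_hypnat_def by blast
  show ?case
  proof
    assume "{i. f i \<le> Suc n} \<in> U"
    then have "{i. f i \<le> n} \<union> {i. f i = Suc n} \<in> U" using e by simp
    then have "{i. f i = Suc n} \<in> U" using uf_un[OF Suc.prems(1) _ a] by blast
    then show False using b by blast
  qed
qed

lemma ns_gt: "nonprincipal_ultrafilter U \<Longrightarrow> nonstandard_hypnat U f \<Longrightarrow> {i. n < f i} \<in> U"
proof -
  assume a: "nonprincipal_ultrafilter U" "nonstandard_hypnat U f"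
  have "- {i. f i \<le> n} = {i. n < f i}" by auto
  moreover have "- {i. f i \<le> n} \<in> U" using uf_compl[OF a(1) ns_le[OF a]] .
  ultimately show ?thesis by simp
qed

lemma ns_big: "nonprincipal_ultrafilter U \<Longrightarrow> nonstandard_hypnat U f \<Longrightarrow> finite s \<Longrightarrow> {i. \<forall>y\<in>s. y < f i} \<in> U"
proof -
  assume a: "nonprincipal_ultrafilter U" "nonstandard_hypnat U f" "finite s"
  have "{i. sum id s < f i} \<subseteq> {i. \<forall>y\<in>s. y < f i}"
  proof (safe)
    fix i y assume "sum id s < f i" "y \<in> s"
    then show "y < f i" using member_le_sum[of y s id] a(3) by simp
  qed
  then show ?thesis by (rule uf_up[OF a(1) ns_gt[OF a(1,2)]])
qed

lemma ns_two: "nonprincipal_ultrafilter U \<Longrightarrow> nonstandard_hypnat U f \<Longrightarrow> A \<in> U \<Longrightarrow> \<exists>i j. i \<in> A \<and> j \<in> A \<and> f i \<noteq> f j"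
proof -
  assume a: "nonprincipal_ultrafilter U" "nonstandard_hypnat U f" "A \<in> U"
  have "A \<noteq> {}" using uf_empty[OF a(1)] a(3) by blast
  then obtain i where i: "i \<in> A" by blast
  show ?thesis
  proof (rule ccontr)
    assume "\<not> ?thesis"
    then have "\<forall>j\<in>A. f j = f i" using i by blast
    then have "A \<subseteq> {j. f j = f i}" by blast
    then have "{j. f j = f i} \<in> U" using uf_up[OF a(1) a(3)] by blast
    then show False using a(2) unfolding nonstandard_hypnat_def by blast
  qed
qed

lemma stem_unique: "is_stem T s \<Longrightarrow> stem T = s"
proof -
  assume a: "is_stem T s"
  show "stem T = s" unfolding stem_def
  proof (rule the_equality[where P="is_stem T", OF a])
    fix s' assume b: "is_stem T s'"
    have "s' \<sqsubseteq> s" using a b unfolding is_stem_def by blast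
    moreover have "s \<sqsubseteq> s'" using a b unfolding is_stem_def by blast
    ultimately show "s' = s" using iseg_antisym by blast
  qed
qed

lemma stem_is: "has_stem T \<Longrightarrow> is_stem T (stem T)"
  unfolding has_stem_def using stem_unique by metis

lemma iseg_down: "a \<sqsubseteq> b \<Longrightarrow> y \<in> a \<Longrightarrow> z \<in> b \<Longrightarrow> z < y \<Longrightarrow> z \<in> a"
  unfolding iseg_char by blast

lemma two_contra:
  assumes xy: "(x::nat) < y" and xs: "x \<notin> s" "y \<notin> s"
    and hx: "insert x s \<sqsubseteq> s' \<or> s' = insert x s"
    and hy: "insert y s \<sqsubseteq> s' \<or> s' = insert y s"
  shows False
  using hy
proof
  assume e: "s' = insert y s"
  show False using hx
  proof
    assume "insert x s \<sqsubseteq> s'"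
    then have "x \<in> s'" using iseg_sub by blast
    then show False using e xs xy by simp
  next
    assume "s' = insert x s"
    then show False using e xs xy by (metis insert_iff less_irrefl)
  qed
next
  assume ys: "insert y s \<sqsubseteq> s'"
  then have ys': "y \<in> s'" using iseg_sub by blast
  show False using hx
  proof
    assume "insert x s \<sqsubseteq> s'"
    then have "x \<in> s'" using iseg_sub by blast
    then have "x \<in> insert y s" using iseg_down[OF ys _ _ xy] by blast
    then show False using xs xy by simp
  next
    assume "s' = insert x s"
    then show False using ys' xs xy by simp
  qed
qed

lemma stem_char:
  assumes "s \<in> T" "\<forall>t\<in>T. s \<sqsubseteq> t \<or> t \<sqsubseteq> s" "insert x s \<in> T" "insert y s \<in> T" "x \<noteq> y"
    "\<forall>z\<in>s. z < x" "\<forall>z\<in>s. z < y" "finite s"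
  shows "is_stem T s"
proof -
have "s' \<sqsubseteq> s" if s': "s' \<in> T" "\<forall>t\<in>T. s' \<sqsubseteq> t \<or> t \<sqsubseteq> s'" for s'
proof -
  show "s' \<sqsubseteq> s"
  proof (rule ccontr)
    assume n: "\<not> s' \<sqsubseteq> s"
    have c1: "s' \<sqsubseteq> insert x s \<or> insert x s \<sqsubseteq> s'" using s'(2) assms(3) by blast
    have hx: "insert x s \<sqsubseteq> s' \<or> s' = insert x s"
      using c1 iseg_insert_cases[of s' x s, OF _ assms(8) assms(6)] n by blast
    have c2: "s' \<sqsubseteq> insert y s \<or> insert y s \<sqsubseteq> s'" using s'(2) assms(4) by blast
    have hy: "insert y s \<sqsubseteq> s' \<or> s' = insert y s"
      using c2 iseg_insert_cases[of s' y s, OF _ assms(8) assms(7)] n by blast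
    have xs: "x \<notin> s" "y \<notin> s" using assms(6,7) by auto
    show False
    proof (cases "x < y")
      case True
      show ?thesis using two_contra[OF True xs hx hy] .
    next
      case False
      then have "y < x" using assms(5) by simp
      show ?thesis using two_contra[OF \<open>y < x\<close> xs(2) xs(1) hy hx] .
    qed
  qed
qed
then have m: "\<forall>s'\<in>T. (\<forall>t\<in>T. s' \<sqsubseteq> t \<or> t \<sqsubseteq> s') \<longrightarrow> s' \<sqsubseteq> s" by blast
show ?thesis unfolding is_stem_def by (intro conjI assms(1) assms(2) m)
qed



definition good :: "nat set set \<Rightarrow> (nat set \<Rightarrow> nat \<Rightarrow> nat) \<Rightarrow> nat set set \<Rightarrow> nat set set \<Rightarrow> nat set \<Rightarrow> bool" where
  "good U \<phi> Ob T s \<longleftrightarrow> (\<exists>S. alpha_tree U \<phi> S \<and> S \<subseteq> T \<and> stem S = s \<and> body S \<subseteq> Ob)"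

lemma at_tree: "alpha_tree U \<phi> T \<Longrightarrow> is_tree T" unfolding alpha_tree_def by blast
lemma at_stem: "alpha_tree U \<phi> T \<Longrightarrow> is_stem T (stem T)" unfolding alpha_tree_def using stem_is by blast
lemma at_child: "alpha_tree U \<phi> T \<Longrightarrow> t \<in> T \<Longrightarrow> stem T \<sqsubseteq> t \<Longrightarrow> {i. insert (\<phi> t i) t \<in> T} \<in> U"
  unfolding alpha_tree_def restr_def by blast
lemma tree_fin: "is_tree T \<Longrightarrow> t \<in> T \<Longrightarrow> finite t" unfolding is_tree_def by blast
lemma tree_closed: "is_tree T \<Longrightarrow> t \<in> T \<Longrightarrow> s \<sqsubseteq> t \<Longrightarrow> s \<in> T" unfolding is_tree_def by blast
lemma stem_comp: "is_stem T s \<Longrightarrow> t \<in> T \<Longrightarrow> s \<sqsubseteq> t \<or> t \<sqsubseteq> s" unfolding is_stem_def by blast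
lemma stem_in: "is_stem T s \<Longrightarrow> s \<in> T" unfolding is_stem_def by blast

lemma same_card_eq: "a \<sqsubseteq> X \<Longrightarrow> b \<sqsubseteq> X \<Longrightarrow> card a = card b \<Longrightarrow> a = b"
proof -
  assume a: "a \<sqsubseteq> X" "b \<sqsubseteq> X" "card a = card b"
  have f: "finite a" "finite b" using a unfolding iseg_char by blast+
  from iseg_comp[OF a(1,2)] show "a = b"
  proof
    assume "a \<sqsubseteq> b" then show ?thesis using card_subset_eq[OF f(2) iseg_sub] a(3) by blast
  next
    assume "b \<sqsubseteq> a" then show ?thesis using card_subset_eq[OF f(1) iseg_sub] a(3) by metis
  qed
qed

lemma mk_alpha_tree:
  assumes "is_tree S" "is_stem S s" "\<forall>t\<in>S. s \<sqsubseteq> t \<longrightarrow> {i. insert (\<phi> t i) t \<in> S} \<in> U"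
  shows "alpha_tree U \<phi> S" "stem S = s"
proof -
  have st: "stem S = s" using assms(2) stem_unique by blast
  then show "stem S = s" .
  have "s \<in> restr S s" using assms(2) stem_in tree_fin[OF assms(1)] iseg_refl unfolding restr_def by blast
  then show "alpha_tree U \<phi> S" unfolding alpha_tree_def has_stem_def st using assms unfolding restr_def by blast
qed

context
  fixes U :: "nat set set" and \<phi> :: "nat set \<Rightarrow> nat \<Rightarrow> nat" and Ob T :: "nat set set"
  assumes uf: "nonprincipal_ultrafilter U"
    and ns: "\<forall>s. finite s \<longrightarrow> nonstandard_hypnat U (\<phi> s)"
    and TT: "alpha_tree U \<phi> T"
begin

lemma bad_children:
  assumes sT: "s \<in> T" and sst: "stem T \<sqsubseteq> s" and bad: "\<not> good U \<phi> Ob T s"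
  shows "{i. insert (\<phi> s i) s \<in> T \<and> \<not> good U \<phi> Ob T (insert (\<phi> s i) s) \<and> (\<forall>y\<in>s. y < \<phi> s i)} \<in> U"
    (is "?C \<in> U")
proof (rule ccontr)
  assume nC: "?C \<notin> U"
  have fs: "finite s" using tree_fin[OF at_tree[OF TT] sT] .
  have nss: "nonstandard_hypnat U (\<phi> s)" using ns fs by blast
  let ?B = "{i. insert (\<phi> s i) s \<in> T \<and> (\<forall>y\<in>s. y < \<phi> s i)}"
  have "?B = {i. insert (\<phi> s i) s \<in> T} \<inter> {i. \<forall>y\<in>s. y < \<phi> s i}" by auto
  then have B: "?B \<in> U" using uf_int[OF uf] at_child[OF TT sT sst] ns_big[OF uf nss fs] by simp
  define A0 where "A0 = ?B \<inter> - ?C"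
  have A0U: "A0 \<in> U" unfolding A0_def using uf_int[OF uf B uf_compl[OF uf nC]] .
  have A0p: "i \<in> A0 \<Longrightarrow> insert (\<phi> s i) s \<in> T \<and> good U \<phi> Ob T (insert (\<phi> s i) s) \<and> (\<forall>y\<in>s. y < \<phi> s i)" for i
    unfolding A0_def by auto
  define X0 where "X0 = \<phi> s ` A0"
  define W where "W x = (SOME W. alpha_tree U \<phi> W \<and> W \<subseteq> T \<and> stem W = insert x s \<and> body W \<subseteq> Ob)" for x
  have Wp: "alpha_tree U \<phi> (W x) \<and> W x \<subseteq> T \<and> stem (W x) = insert x s \<and> body (W x) \<subseteq> Ob" if x0: "x \<in> X0" for x
  proof -
    obtain i where "i \<in> A0" "x = \<phi> s i" using x0 unfolding X0_def by blast
    then have "good U \<phi> Ob T (insert x s)" using A0p by blast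
    then show ?thesis unfolding W_def good_def by (rule someI_ex)
  qed
  have Wat: "x \<in> X0 \<Longrightarrow> alpha_tree U \<phi> (W x)" for x using Wp by blast
  have WT: "x \<in> X0 \<Longrightarrow> W x \<subseteq> T" for x using Wp by blast
  have Wtree: "x \<in> X0 \<Longrightarrow> is_tree (W x)" for x using Wat at_tree by blast
  have WO: "x \<in> X0 \<Longrightarrow> body (W x) \<subseteq> Ob" for x using Wp by blast
  have Xb: "x \<in> X0 \<Longrightarrow> \<forall>y\<in>s. y < x" for x unfolding X0_def using A0p by blast
  have Wstem: "x \<in> X0 \<Longrightarrow> is_stem (W x) (insert x s)" for x using Wp at_stem by metis
  have Win: "x \<in> X0 \<Longrightarrow> insert x s \<in> W x" for x using Wstem stem_in by blast
  have K: "x \<in> X0 \<Longrightarrow> t \<in> W x \<Longrightarrow> t \<sqsubseteq> s \<or> insert x s \<sqsubseteq> t" for x t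
    using stem_comp[OF Wstem] iseg_insert_cases fs Xb by blast
  define S where "S = {t. t \<sqsubseteq> s} \<union> (\<Union>x\<in>X0. W x)"
  have sS: "s \<in> S" unfolding S_def using iseg_refl fs by blast
  have treeS: "is_tree S" unfolding is_tree_def
  proof (intro conjI ballI allI impI)
    show "S \<noteq> {}" using sS by blast
  next
    fix t assume "t \<in> S" then show "finite t" unfolding S_def
    proof
      assume "t \<in> {t. t \<sqsubseteq> s}" then show "finite t" using iseg_char by blast
    next
      assume "t \<in> (\<Union>x\<in>X0. W x)"
      then obtain x where "x \<in> X0" "t \<in> W x" by blast
      then show "finite t" using tree_fin[OF Wtree] by blast
    qed
  next
    fix t u assume tS: "t \<in> S" and ut: "u \<sqsubseteq> t"
    show "u \<in> S" using tS unfolding S_def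
    proof
      assume "t \<in> {t. t \<sqsubseteq> s}" then show "u \<in> {t. t \<sqsubseteq> s} \<union> (\<Union>x\<in>X0. W x)" using ut iseg_trans by blast
    next
      assume "t \<in> (\<Union>x\<in>X0. W x)"
      then obtain x where "x \<in> X0" "t \<in> W x" by blast
      then have "u \<in> W x" using tree_closed[OF Wtree] ut by blast
      then show "u \<in> {t. t \<sqsubseteq> s} \<union> (\<Union>x\<in>X0. W x)" using \<open>x \<in> X0\<close> by blast
    qed
  qed
  have compS: "\<forall>t\<in>S. s \<sqsubseteq> t \<or> t \<sqsubseteq> s"
  proof
    fix t assume "t \<in> S"
    then show "s \<sqsubseteq> t \<or> t \<sqsubseteq> s" unfolding S_def
    proof
      assume "t \<in> {t. t \<sqsubseteq> s}" then show ?thesis by blast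
    next
      assume "t \<in> (\<Union>x\<in>X0. W x)"
      then obtain x where x: "x \<in> X0" "t \<in> W x" by blast
      have "s \<sqsubseteq> insert x s" using iseg_insert[OF fs Xb[OF x(1)]] .
      then show ?thesis using K[OF x] iseg_trans by blast
    qed
  qed
  obtain i j where ij: "i \<in> A0" "j \<in> A0" "\<phi> s i \<noteq> \<phi> s j" using ns_two[OF uf nss A0U] by blast
  have ijX: "\<phi> s i \<in> X0" "\<phi> s j \<in> X0" unfolding X0_def using ij by auto
  have stemS: "is_stem S s"
    apply (rule stem_char[OF sS compS _ _ ij(3) Xb Xb fs])
    using ijX Win unfolding S_def by blast+
  have childS: "\<forall>t\<in>S. s \<sqsubseteq> t \<longrightarrow> {i. insert (\<phi> t i) t \<in> S} \<in> U"
  proof (intro ballI impI)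
    fix t assume tS: "t \<in> S" and st: "s \<sqsubseteq> t"
    have base: "{i. insert (\<phi> s i) s \<in> S} \<in> U"
    proof -
      have "A0 \<subseteq> {i. insert (\<phi> s i) s \<in> S}" unfolding S_def X0_def using Win X0_def by blast
      then show ?thesis using uf_up[OF uf A0U] by blast
    qed
    show "{i. insert (\<phi> t i) t \<in> S} \<in> U"
    proof (cases "t \<sqsubseteq> s")
      case True then have "t = s" using st iseg_antisym by blast
      then show ?thesis using base by simp
    next
      case False
      then obtain x where x: "x \<in> X0" "t \<in> W x" using tS unfolding S_def by blast
      then have "insert x s \<sqsubseteq> t" using K False by blast
      then have "{i. insert (\<phi> t i) t \<in> W x} \<in> U" using at_child[OF Wat[OF x(1)] x(2)] Wp[OF x(1)] by simp
      moreover have "{i. insert (\<phi> t i) t \<in> W x} \<subseteq> {i. insert (\<phi> t i) t \<in> S}" unfolding S_def using x by blast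
      ultimately show ?thesis using uf_up[OF uf] by blast
    qed
  qed
  have atS: "alpha_tree U \<phi> S" and stS: "stem S = s" using mk_alpha_tree[OF treeS stemS childS] by auto
  have subT: "S \<subseteq> T" unfolding S_def using tree_closed[OF at_tree[OF TT] sT] WT by blast
  have bodyS: "body S \<subseteq> Ob"
  proof
    fix X assume XS: "X \<in> body S"
    then have inf: "infinite X" and segs: "\<And>w. finite w \<Longrightarrow> w \<sqsubseteq> X \<Longrightarrow> w \<in> S" unfolding body_def by auto
    obtain v where v: "v \<sqsubseteq> X" "card v > card s" using seg_exists[OF inf] by blast
    have fv: "finite v" using v iseg_char by blast
    have vS: "v \<in> S" using segs fv v by blast
    have nvs: "\<not> w \<sqsubseteq> s" if "card w > card s" for w using iseg_card[OF _ fs, of w] that by linarith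
    obtain x where x: "x \<in> X0" "v \<in> W x" using vS nvs[OF v(2)] unfolding S_def by blast
    have xv: "insert x s \<sqsubseteq> v" using K x nvs[OF v(2)] by blast
    have xX: "insert x s \<sqsubseteq> X" using iseg_trans xv v by blast
    have cx: "card (insert x s) = Suc (card s)" if "x \<in> X0" for x using Xb[OF that] fs by auto
    have "X \<in> body (W x)" unfolding body_def
    proof (intro CollectI conjI allI impI inf)
      fix w assume w: "finite w \<and> w \<sqsubseteq> X"
      show "w \<in> W x"
      proof (cases "w \<sqsubseteq> v")
        case True then show ?thesis using tree_closed[OF Wtree[OF x(1)] x(2)] by blast
      next
        case False
        then have vw: "v \<sqsubseteq> w" using iseg_comp w v by blast
        then have "card w > card s" using iseg_card w v by fastforce
        moreover have "w \<in> S" using segs w by blast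
        ultimately obtain y where y: "y \<in> X0" "w \<in> W y" using nvs unfolding S_def by blast
        then have "insert y s \<sqsubseteq> w" using K nvs \<open>card w > card s\<close> by blast
        then have "insert y s \<sqsubseteq> X" using w iseg_trans by blast
        then have "insert y s = insert x s" using same_card_eq[OF _ xX] cx[OF x(1)] cx[OF y(1)] by simp
        then have "y = x" using Xb x y by blast
        then show ?thesis using y by simp
      qed
    qed
    then show "X \<in> Ob" using WO x by blast
  qed
  have "good U \<phi> Ob T s" unfolding good_def using atS subT stS bodyS by blast
  then show False using bad by blast
qed

lemma body_mono: "S \<subseteq> T' \<Longrightarrow> body S \<subseteq> body T'"
  unfolding body_def by blast

lemma kids_good:
  assumes "t \<in> T" "stem T \<sqsubseteq> t" "\<not> good U \<phi> Ob T t"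
  obtains i j where "insert (\<phi> t i) t \<in> T" "\<not> good U \<phi> Ob T (insert (\<phi> t i) t)" "\<forall>y\<in>t. y < \<phi> t i"
    "insert (\<phi> t j) t \<in> T" "\<not> good U \<phi> Ob T (insert (\<phi> t j) t)" "\<forall>y\<in>t. y < \<phi> t j"
    "\<phi> t i \<noteq> \<phi> t j"
proof -
  have fs: "finite t" using tree_fin[OF at_tree[OF TT] assms(1)] .
  have nss: "nonstandard_hypnat U (\<phi> t)" using ns fs by blast
  from ns_two[OF uf nss bad_children[OF assms]] that show thesis by blast
qed

lemma bad_stem_tree:
  assumes bad: "\<not> good U \<phi> Ob T (stem T)"
    and opn: "\<forall>X\<in>Ob. \<exists>T'. alpha_tree U \<phi> T' \<and> X \<in> body T' \<and> body T' \<subseteq> Ob"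
  shows "\<exists>S. alpha_tree U \<phi> S \<and> S \<subseteq> T \<and> stem S = stem T \<and> body S \<inter> Ob = {}"
proof -
  define st where "st = stem T"
  have stT: "is_stem T st" unfolding st_def using at_stem[OF TT] .
  have stin: "st \<in> T" using stem_in[OF stT] .
  have treeT: "is_tree T" using at_tree[OF TT] .
  have fst: "finite st" using tree_fin[OF treeT stin] .
  define P where "P t \<longleftrightarrow> st \<sqsubseteq> t \<and> (\<forall>u. st \<sqsubseteq> u \<and> u \<sqsubseteq> t \<longrightarrow> \<not> good U \<phi> Ob T u)" for t
  define S where "S = {t \<in> T. t \<sqsubseteq> st \<or> P t}"
  have Sp: "P t" if "t \<in> S" "st \<sqsubseteq> t" for t
  proof (cases "t \<sqsubseteq> st")
    case True
    then have "t = st" using that(2) iseg_antisym by blast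
    then show ?thesis unfolding P_def using bad st_def iseg_antisym that(2) by metis
  next
    case False then show ?thesis using that unfolding S_def by blast
  qed
  have stS: "st \<in> S" unfolding S_def using stin iseg_refl[OF fst] by blast
  have ST: "S \<subseteq> T" unfolding S_def by blast
  have ins: "insert x t \<in> S" if "t \<in> S" "st \<sqsubseteq> t" "insert x t \<in> T" "\<not> good U \<phi> Ob T (insert x t)"
    "\<forall>y\<in>t. y < x" for t x
  proof -
    have Pt: "P t" using Sp that(1,2) .
    have ft: "finite t" using tree_fin[OF treeT] ST that(1) by blast
    have tt: "t \<sqsubseteq> insert x t" using iseg_insert[OF ft that(5)] .
    have "P (insert x t)" unfolding P_def
    proof (intro conjI allI impI)
      show "st \<sqsubseteq> insert x t" using iseg_trans[OF that(2) tt] .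
    next
      fix u assume u: "st \<sqsubseteq> u \<and> u \<sqsubseteq> insert x t"
      then have "u \<sqsubseteq> t \<or> u = insert x t" using iseg_insert_cases[OF _ ft that(5)] by blast
      then show "\<not> good U \<phi> Ob T u" using Pt u that(4) unfolding P_def by blast
    qed
    then show ?thesis unfolding S_def using that(3) by blast
  qed
  have treeS: "is_tree S" unfolding is_tree_def
  proof (intro conjI ballI allI impI)
    show "S \<noteq> {}" using stS by blast
  next
    fix t assume "t \<in> S" then show "finite t" using ST tree_fin[OF treeT] by blast
  next
    fix t w assume tS: "t \<in> S" and wt: "w \<sqsubseteq> t"
    have wT: "w \<in> T" using tree_closed[OF treeT _ wt] ST tS by blast
    show "w \<in> S"
    proof (cases "t \<sqsubseteq> st")
      case True then show ?thesis unfolding S_def using wT iseg_trans[OF wt] by blast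
    next
      case False
      then have Pt: "P t" using tS unfolding S_def by blast
      then have stt: "st \<sqsubseteq> t" unfolding P_def by blast
      from iseg_comp[OF wt stt] show ?thesis
      proof
        assume "w \<sqsubseteq> st" then show ?thesis unfolding S_def using wT by blast
      next
        assume sw: "st \<sqsubseteq> w"
        have "P w" unfolding P_def using sw Pt iseg_trans[OF _ wt] unfolding P_def by blast
        then show ?thesis unfolding S_def using wT by blast
      qed
    qed
  qed
  have compS: "\<forall>t\<in>S. st \<sqsubseteq> t \<or> t \<sqsubseteq> st" unfolding S_def P_def by blast
  obtain i j where ij: "insert (\<phi> st i) st \<in> T" "\<not> good U \<phi> Ob T (insert (\<phi> st i) st)" "\<forall>y\<in>st. y < \<phi> st i"
    "insert (\<phi> st j) st \<in> T" "\<not> good U \<phi> Ob T (insert (\<phi> st j) st)" "\<forall>y\<in>st. y < \<phi> st j"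
    "\<phi> st i \<noteq> \<phi> st j"
    using kids_good[OF stin _ bad[folded st_def]] st_def iseg_refl[OF fst] by metis
  have stemS: "is_stem S st"
    using stem_char[OF stS compS ins[OF stS iseg_refl[OF fst] ij(1-3)] ins[OF stS iseg_refl[OF fst] ij(4-6)] ij(7) ij(3) ij(6) fst] .
  have childS: "\<forall>t\<in>S. st \<sqsubseteq> t \<longrightarrow> {i. insert (\<phi> t i) t \<in> S} \<in> U"
  proof (intro ballI impI)
    fix t assume tS: "t \<in> S" and stt: "st \<sqsubseteq> t"
    have "\<not> good U \<phi> Ob T t" using Sp[OF tS stt] iseg_refl tree_fin[OF treeS tS] stt unfolding P_def by blast
    then have C: "{i. insert (\<phi> t i) t \<in> T \<and> \<not> good U \<phi> Ob T (insert (\<phi> t i) t) \<and> (\<forall>y\<in>t. y < \<phi> t i)} \<in> U"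
      using bad_children[of t] ST tS stt st_def by blast
    have "{i. insert (\<phi> t i) t \<in> T \<and> \<not> good U \<phi> Ob T (insert (\<phi> t i) t) \<and> (\<forall>y\<in>t. y < \<phi> t i)}
       \<subseteq> {i. insert (\<phi> t i) t \<in> S}" using ins[OF tS stt] by blast
    then show "{i. insert (\<phi> t i) t \<in> S} \<in> U" using uf_up[OF uf C] by blast
  qed
  have atS: "alpha_tree U \<phi> S" and stemSeq: "stem S = st" using mk_alpha_tree[OF treeS stemS childS] by auto
  have disj: "body S \<inter> Ob = {}"
  proof (rule ccontr)
    assume "body S \<inter> Ob \<noteq> {}"
    then obtain X where XS: "X \<in> body S" and XO: "X \<in> Ob" by blast
    obtain T' where T': "alpha_tree U \<phi> T'" "X \<in> body T'" "body T' \<subseteq> Ob" using opn XO by blast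
    define r where "r = stem T'"
    have rT': "is_stem T' r" unfolding r_def using at_stem[OF T'(1)] .
    have treeT': "is_tree T'" using at_tree[OF T'(1)] .
    have fr: "finite r" using tree_fin[OF treeT' stem_in[OF rT']] .
    have inf: "infinite X" using XS unfolding body_def by blast
    obtain u where u: "u \<sqsubseteq> X" "card u > card st + card r" using seg_exists[OF inf] by blast
    have fu: "finite u" using u(1) iseg_char by blast
    have uS: "u \<in> S" using XS u(1) fu unfolding body_def by blast
    have uT': "u \<in> T'" using T'(2) u(1) fu unfolding body_def by blast
    have uT: "u \<in> T" using ST uS by blast
    have stu: "st \<sqsubseteq> u"
    proof -
      have "st \<sqsubseteq> u \<or> u \<sqsubseteq> st" using stem_comp[OF stemS uS] .
      moreover have "\<not> u \<sqsubseteq> st" using iseg_card[OF _ fst, of u] u(2) by linarith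
      ultimately show ?thesis by blast
    qed
    have ru: "r \<sqsubseteq> u"
    proof -
      have "r \<sqsubseteq> u \<or> u \<sqsubseteq> r" using stem_comp[OF rT' uT'] .
      moreover have "\<not> u \<sqsubseteq> r" using iseg_card[OF _ fr, of u] u(2) by linarith
      ultimately show ?thesis by blast
    qed
    have badu: "\<not> good U \<phi> Ob T u" using Sp[OF uS stu] iseg_refl[OF fu] stu unfolding P_def by blast
    define S' where "S' = {t \<in> T \<inter> T'. t \<sqsubseteq> u \<or> u \<sqsubseteq> t}"
    have uS': "u \<in> S'" unfolding S'_def using uT uT' iseg_refl[OF fu] by blast
    have S'T: "S' \<subseteq> T" "S' \<subseteq> T'" unfolding S'_def by blast+
    have treeS': "is_tree S'" unfolding is_tree_def
    proof (intro conjI ballI allI impI)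
      show "S' \<noteq> {}" using uS' by blast
    next
      fix t assume "t \<in> S'" then show "finite t" using S'T tree_fin[OF treeT] by blast
    next
      fix t w assume tS: "t \<in> S'" and wt: "w \<sqsubseteq> t"
      have wT: "w \<in> T" "w \<in> T'" using tree_closed[OF treeT _ wt] tree_closed[OF treeT' _ wt] S'T tS by blast+
      have "t \<sqsubseteq> u \<or> u \<sqsubseteq> t" using tS unfolding S'_def by blast
      then have "w \<sqsubseteq> u \<or> u \<sqsubseteq> w"
      proof
        assume "t \<sqsubseteq> u" then show ?thesis using iseg_trans[OF wt] by blast
      next
        assume "u \<sqsubseteq> t" then show ?thesis using iseg_comp[OF wt] by blast
      qed
      then show "w \<in> S'" unfolding S'_def using wT by blast
    qed
    have D: "{i. insert (\<phi> t i) t \<in> T} \<inter> {i. insert (\<phi> t i) t \<in> T'} \<inter> {i. \<forall>y\<in>t. y < \<phi> t i} \<in> U"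
      and Dsub: "{i. insert (\<phi> t i) t \<in> T} \<inter> {i. insert (\<phi> t i) t \<in> T'} \<inter> {i. \<forall>y\<in>t. y < \<phi> t i} \<subseteq> {i. insert (\<phi> t i) t \<in> S'}"
      if tS: "t \<in> S'" and ut: "u \<sqsubseteq> t" for t
    proof -
      have tT: "t \<in> T" "t \<in> T'" using tS S'T by blast+
      have ft: "finite t" using tree_fin[OF treeT tT(1)] .
      have c1: "{i. insert (\<phi> t i) t \<in> T} \<in> U" using at_child[OF TT tT(1)] iseg_trans[OF stu ut] st_def by simp
      have c2: "{i. insert (\<phi> t i) t \<in> T'} \<in> U" using at_child[OF T'(1) tT(2)] iseg_trans[OF ru ut] r_def by simp
      have c3: "{i. \<forall>y\<in>t. y < \<phi> t i} \<in> U" using ns_big[OF uf _ ft] ns ft by blast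
      show "{i. insert (\<phi> t i) t \<in> T} \<inter> {i. insert (\<phi> t i) t \<in> T'} \<inter> {i. \<forall>y\<in>t. y < \<phi> t i} \<in> U"
        using uf_int[OF uf uf_int[OF uf c1 c2] c3] .
      show "{i. insert (\<phi> t i) t \<in> T} \<inter> {i. insert (\<phi> t i) t \<in> T'} \<inter> {i. \<forall>y\<in>t. y < \<phi> t i} \<subseteq> {i. insert (\<phi> t i) t \<in> S'}"
      proof
        fix i assume "i \<in> {i. insert (\<phi> t i) t \<in> T} \<inter> {i. insert (\<phi> t i) t \<in> T'} \<inter> {i. \<forall>y\<in>t. y < \<phi> t i}"
        then have h: "insert (\<phi> t i) t \<in> T" "insert (\<phi> t i) t \<in> T'" "\<forall>y\<in>t. y < \<phi> t i" by auto
        have "u \<sqsubseteq> insert (\<phi> t i) t" using iseg_trans[OF ut iseg_insert[OF ft h(3)]] .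
        then show "i \<in> {i. insert (\<phi> t i) t \<in> S'}" unfolding S'_def using h by blast
      qed
    qed
    have childS': "\<forall>t\<in>S'. u \<sqsubseteq> t \<longrightarrow> {i. insert (\<phi> t i) t \<in> S'} \<in> U"
      using D Dsub uf_up[OF uf] by blast
    have compS': "\<forall>t\<in>S'. u \<sqsubseteq> t \<or> t \<sqsubseteq> u" unfolding S'_def by blast
    have nsu: "nonstandard_hypnat U (\<phi> u)" using ns fu by blast
    obtain i j where ij: "i \<in> {i. insert (\<phi> u i) u \<in> T} \<inter> {i. insert (\<phi> u i) u \<in> T'} \<inter> {i. \<forall>y\<in>u. y < \<phi> u i}"
      "j \<in> {i. insert (\<phi> u i) u \<in> T} \<inter> {i. insert (\<phi> u i) u \<in> T'} \<inter> {i. \<forall>y\<in>u. y < \<phi> u i}"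
      "\<phi> u i \<noteq> \<phi> u j"
      using ns_two[OF uf nsu D[OF uS' iseg_refl[OF fu]]] by blast
    have ijS: "insert (\<phi> u i) u \<in> S'" "insert (\<phi> u j) u \<in> S'" using Dsub[OF uS' iseg_refl[OF fu]] ij by blast+
    have ijb: "\<forall>y\<in>u. y < \<phi> u i" "\<forall>y\<in>u. y < \<phi> u j" using ij by blast+
    have stemS': "is_stem S' u" using stem_char[OF uS' compS' ijS ij(3) ijb fu] .
    have atS': "alpha_tree U \<phi> S'" and stS': "stem S' = u" using mk_alpha_tree[OF treeS' stemS' childS'] by auto
    have "body S' \<subseteq> Ob" using body_mono[OF S'T(2)] T'(3) by blast
    then have "good U \<phi> Ob T u" unfolding good_def using atS' stS' S'T(1) by blast
    then show False using badu by blast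
  qed
  show ?thesis using atS ST stemSeq disj st_def by blast
qed

end

theorem mainTheorem20:
  fixes U :: "nat set set" and \<phi> :: "nat set \<Rightarrow> nat \<Rightarrow> nat" and \<O> :: "nat set set"
  assumes "nonprincipal_ultrafilter U"
    and "\<forall>s. finite s \<longrightarrow> nonstandard_hypnat U (\<phi> s)"
    and "\<O> \<subseteq> {X. infinite X}"
    and "alpha_Ellentuck_open U \<phi> \<O>"
  shows "alpha_Ramsey U \<phi> \<O>"
proof -
  have opn: "\<forall>X\<in>\<O>. \<exists>T'. alpha_tree U \<phi> T' \<and> X \<in> body T' \<and> body T' \<subseteq> \<O>"
  proof
    fix X assume X: "X \<in> \<O>"
    obtain F where F: "F \<subseteq> {body T | T. alpha_tree U \<phi> T}" "\<O> = \<Union>F" using assms(4) unfolding alpha_Ellentuck_open_def by blast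
    then obtain B where B: "B \<in> F" "X \<in> B" using X by blast
    then obtain T' where "B = body T'" "alpha_tree U \<phi> T'" using F(1) by blast
    then show "\<exists>T'. alpha_tree U \<phi> T' \<and> X \<in> body T' \<and> body T' \<subseteq> \<O>" using B F(2) by blast
  qed
  show ?thesis unfolding alpha_Ramsey_def
  proof (intro allI impI)
    fix T assume TT: "alpha_tree U \<phi> T"
    show "\<exists>S. alpha_tree U \<phi> S \<and> S \<subseteq> T \<and> stem S = stem T \<and> (body S \<subseteq> \<O> \<or> body S \<inter> \<O> = {})"
    proof (cases "good U \<phi> \<O> T (stem T)")
      case True then show ?thesis unfolding good_def by blast
    next
      case False
      then show ?thesis using bad_stem_tree[OF assms(1,2) TT False opn] by blast
    qed
  qed
qed

end
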